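(* Let $K$ be a field of characteristic not equal to $2$ and let $S$ be a (unital, not necessarily associative) $K$-algebra with a pseudo-degree function $\chi$. If $a\in N(S)$ satisfies $\chi(a)=m>0$ and $C_S(a)$ satisfies condition $D(1)$, then $C_S(a)$ has a finite basis as a (left) $K[a]$-module, and the cardinality of this basis divides $m$.
   Context: All algebras are unital but not necessarily associative, and $K$ is embedded in $S$ via the unit. The nucleus $N(S)$ is the set of $x\in S$ with $x(yz)=(xy)z$, $(yx)z=y(xz)$ and $(yz)x=y(zx)$ for all $y,z\in S$. $C_S(a)$ denotes the set of elements of $S$ commuting with $a$, and $K[a]$ the subalgebra generated by $a$. A pseudo-degree function on $S$ is a map $\chi:S\to\mathbb{Z}\cup\{-\infty\}$ such that $\chi(x)=-\infty$ iff $x=0$; $\chi(xy)=\chi(x)+\chi(y)$; and $\chi(x+y)\le\max(\chi(x),\chi(y))$ for all $x,y\in S$. A subalgebra $B\subseteq S$ satisfies condition $D(1)$ if $\chi(x)\ge0$ for all nonzero $x\in B$, and whenever $b_1,b_2\in B$ satisfy $\chi(b_1)=\chi(b_2)$, there exist $\alpha_1,\alpha_2\in K$, not both zero, with $\chi(\alpha_1b_1+\alpha_2b_2)<\chi(b_1)$. *)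

theory Defs
  imports Main "HOL-Library.Extended_Real"
begin

definition kalgebra :: "('k::field \<Rightarrow> 'b::ab_group_add \<Rightarrow> 'b) \<Rightarrow> ('b \<Rightarrow> 'b \<Rightarrow> 'b) \<Rightarrow> 'b \<Rightarrow> bool" where
  "kalgebra smul mul e \<longleftrightarrow>
     vector_space smul \<and>
     (\<forall>x y z. mul (x + y) z = mul x z + mul y z \<and> mul z (x + y) = mul z x + mul z y) \<and>
     (\<forall>c x y. mul (smul c x) y = smul c (mul x y) \<and> mul x (smul c y) = smul c (mul x y)) \<and>
     (\<forall>x. mul e x = x \<and> mul x e = x)"

definition nucleus :: "('b \<Rightarrow> 'b \<Rightarrow> 'b) \<Rightarrow> 'b set" where
  "nucleus mul = {x. \<forall>y z. mul x (mul y z) = mul (mul x y) z \<and>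
                            mul (mul y x) z = mul y (mul x z) \<and>
                            mul (mul y z) x = mul y (mul z x)}"

definition centralizer :: "('b \<Rightarrow> 'b \<Rightarrow> 'b) \<Rightarrow> 'b \<Rightarrow> 'b set" where
  "centralizer mul a = {x. mul x a = mul a x}"

definition subalgebra :: "('k \<Rightarrow> 'b::ab_group_add \<Rightarrow> 'b) \<Rightarrow> ('b \<Rightarrow> 'b \<Rightarrow> 'b) \<Rightarrow> 'b \<Rightarrow> 'b set \<Rightarrow> bool" where
  "subalgebra smul mul e B \<longleftrightarrow> e \<in> B \<and>
     (\<forall>x\<in>B. \<forall>y\<in>B. x + y \<in> B \<and> mul x y \<in> B) \<and> (\<forall>c. \<forall>x\<in>B. smul c x \<in> B)"

definition gen_subalgebra :: "('k \<Rightarrow> 'b::ab_group_add \<Rightarrow> 'b) \<Rightarrow> ('b \<Rightarrow> 'b \<Rightarrow> 'b) \<Rightarrow> 'b \<Rightarrow> 'b \<Rightarrow> 'b set" where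
  "gen_subalgebra smul mul e a = \<Inter>{B. subalgebra smul mul e B \<and> a \<in> B}"

text \<open>Pseudo-degree function with values in Z \<union> {-\<infinity>}, modelled inside ereal.\<close>
definition pseudo_degree :: "('b \<Rightarrow> 'b \<Rightarrow> 'b) \<Rightarrow> ('b::ab_group_add \<Rightarrow> ereal) \<Rightarrow> bool" where
  "pseudo_degree mul chi \<longleftrightarrow>
     (\<forall>x. chi x = -\<infinity> \<longleftrightarrow> x = 0) \<and>
     (\<forall>x. x \<noteq> 0 \<longrightarrow> (\<exists>k::int. chi x = ereal (of_int k))) \<and>
     (\<forall>x y. chi (mul x y) = chi x + chi y) \<and>
     (\<forall>x y. chi (x + y) \<le> max (chi x) (chi y))"

text \<open>Condition D(1); the second clause is required for nonzero b1, b2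
  (for b1 = b2 = 0 it could never hold).\<close>
definition condD1 :: "('k::field \<Rightarrow> 'b::ab_group_add \<Rightarrow> 'b) \<Rightarrow> ('b \<Rightarrow> ereal) \<Rightarrow> 'b set \<Rightarrow> bool" where
  "condD1 smul chi B \<longleftrightarrow>
     (\<forall>x\<in>B. x \<noteq> 0 \<longrightarrow> chi x \<ge> 0) \<and>
     (\<forall>b1\<in>B. \<forall>b2\<in>B. b1 \<noteq> 0 \<and> b2 \<noteq> 0 \<and> chi b1 = chi b2 \<longrightarrow>
        (\<exists>\<alpha>1 \<alpha>2. (\<alpha>1 \<noteq> 0 \<or> \<alpha>2 \<noteq> 0) \<and> chi (smul \<alpha>1 b1 + smul \<alpha>2 b2) < chi b1))"

definition left_module_basis :: "('b \<Rightarrow> 'b \<Rightarrow> 'b) \<Rightarrow> 'b::ab_group_add set \<Rightarrow> 'b set \<Rightarrow> 'b set \<Rightarrow> bool" where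
  "left_module_basis mul R M B \<longleftrightarrow>
     finite B \<and> B \<subseteq> M \<and>
     (\<forall>x\<in>M. \<exists>p. (\<forall>b\<in>B. p b \<in> R) \<and> x = (\<Sum>b\<in>B. mul (p b) b)) \<and>
     (\<forall>p. (\<forall>b\<in>B. p b \<in> R) \<and> (\<Sum>b\<in>B. mul (p b) b) = 0 \<longrightarrow> (\<forall>b\<in>B. p b = 0))"

end

theory Submission
  imports Defs
begin

lemma submonoid_card_dvd:
  fixes R :: "nat set" and M :: nat
  assumes M: "M > 0" and sub: "R \<subseteq> {..<M}" and z: "0 \<in> R"
    and cl: "\<forall>r\<in>R. \<forall>s\<in>R. (r + s) mod M \<in> R"
  shows "card R dvd M"
proof -
  have mult: "(n * r) mod M \<in> R" if "r \<in> R" for n r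
  proof (induction n)
    case 0 then show ?case using z by simp
  next
    case (Suc n)
    have "(r + (n * r) mod M) mod M \<in> R" using cl Suc that by blast
    then show ?case by (simp add: mod_add_right_eq)
  qed
  define d where "d = Min ({r\<in>R. r > 0} \<union> {M})"
  have finR: "finite R" using sub finite_subset by blast
  have dfin: "finite ({r\<in>R. r > 0} \<union> {M})" using finR by simp
  have din: "d \<in> {r\<in>R. r > 0} \<union> {M}" unfolding d_def using dfin by (intro Min_in) auto
  have dle: "d \<le> r" if "r \<in> R" "r > 0" for r unfolding d_def using dfin that by (intro Min_le) auto
  have dpos: "d > 0" using din M by auto
  show ?thesis
  proof (cases "d = M")
    case True
    have "R = {0}"
    proof -
      have "r = 0" if "r \<in> R" for r
      proof (rule ccontr)
        assume "r \<noteq> 0"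
        then have "d \<le> r" using dle that by simp
        moreover have "r < M" using sub that by auto
        ultimately show False using True by simp
      qed
      then show ?thesis using z by blast
    qed
    then show ?thesis by simp
  next
    case False
    then have dR: "d \<in> R" and dM: "d < M" using din sub by auto
    have subt: "r - q * d \<in> R" if "r \<in> R" "q * d \<le> r" for r q
    proof -
      have X: "((M - 1) * q * d) mod M \<in> R" using mult[OF dR, of "(M-1)*q"] by (simp add: mult.assoc)
      have "(r + ((M - 1) * q * d) mod M) mod M \<in> R" using cl X that by blast
      then have "(r + (M - 1) * q * d) mod M \<in> R" by (simp add: mod_add_right_eq)
      moreover have "r + (M - 1) * q * d = (r - q * d) + M * (q * d)"
        using that M by (simp add: algebra_simps diff_mult_distrib)
      moreover have "r - q * d < M" using that sub by auto
      ultimately show ?thesis by simp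
    qed
    have dvdr: "d dvd r" if "r \<in> R" for r
    proof -
      have "r - (r div d) * d \<in> R" using subt[OF that] by (simp add: div_times_less_eq_dividend)
      moreover have "r - (r div d) * d = r mod d" by (simp add: minus_div_mult_eq_mod)
      ultimately have "r mod d \<in> R" by simp
      moreover have "r mod d < d" using dpos by simp
      ultimately have "r mod d = 0" using dle by (meson leD not_gr_zero)
      then show ?thesis by auto
    qed
    have dvdM: "d dvd M"
    proof -
      define x where "x = (M div d) * d"
      have x1: "x \<ge> 1" using dM dpos unfolding x_def
        by (metis One_nat_def Suc_leI div_greater_zero_iff less_imp_le nat_0_less_mult_iff)
      have x2: "x \<le> M" unfolding x_def by (simp add: div_times_less_eq_dividend)
      have "((M - 1) * (M div d) * d) mod M \<in> R" using mult[OF dR, of "(M-1)*(M div d)"] by (simp add: mult.assoc)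
      moreover have "(M - 1) * (M div d) * d = (M - x) + M * (x - 1)"
      proof -
        have "(M - 1) * x = (M - x) + M * (x - 1)" using x1 x2
          by (simp add: diff_mult_distrib diff_mult_distrib2)
        then show ?thesis unfolding x_def by (simp add: mult.assoc)
      qed
      ultimately have "(M - x) mod M \<in> R" by simp
      moreover have "M - x = M mod d" unfolding x_def by (simp add: minus_div_mult_eq_mod)
      moreover have "M mod d < d" using dpos by simp
      ultimately have "M mod d \<in> R" using dM by simp
      then have "M mod d = 0" using dle \<open>M mod d < d\<close> by (meson leD not_gr_zero)
      then show ?thesis by auto
    qed
    have Req: "R = (\<lambda>k. k * d) ` {..<M div d}"
    proof
      show "R \<subseteq> (\<lambda>k. k * d) ` {..<M div d}"
      proof
        fix r assume r: "r \<in> R"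
        then have "r = (r div d) * d" using dvdr by simp
        moreover have "r div d < M div d"
        proof -
          have "r < M" using r sub by auto
          then have "r div d * d < M div d * d" using dvdM dvdr[OF r] by simp
          then show ?thesis by simp
        qed
        ultimately show "r \<in> (\<lambda>k. k * d) ` {..<M div d}" by blast
      qed
    next
      show "(\<lambda>k. k * d) ` {..<M div d} \<subseteq> R"
      proof
        fix y assume "y \<in> (\<lambda>k. k * d) ` {..<M div d}"
        then obtain k where k: "k < M div d" "y = k * d" by auto
        have "k * d < M div d * d" using k dpos by simp
        then have "k * d < M" using dvdM by simp
        then show "y \<in> R" using mult[OF dR, of k] k by simp
      qed
    qed
    have "card R = M div d" unfolding Req using dpos
      by (subst card_image) (auto simp: inj_on_def)
    then show ?thesis by (metis dvdM dvd_div_mult_self dvd_triv_left)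
  qed
qed


locale thm_setting =
  fixes smul :: "'k::field \<Rightarrow> 'b::ab_group_add \<Rightarrow> 'b"
    and mul :: "'b \<Rightarrow> 'b \<Rightarrow> 'b" and e :: 'b
    and chi :: "'b \<Rightarrow> ereal" and a :: 'b and m :: int
  assumes kalg: "kalgebra smul mul e"
    and pd: "pseudo_degree mul chi"
    and nuc: "a \<in> nucleus mul"
    and chia: "chi a = ereal (of_int m)" and mpos: "m > 0"
    and D1: "condD1 smul chi (centralizer mul a)"
begin

sublocale vs: vector_space smul using kalg unfolding kalgebra_def by auto

lemma add_l: "mul (x + y) z = mul x z + mul y z" using kalg unfolding kalgebra_def by blast
lemma add_r: "mul z (x + y) = mul z x + mul z y" using kalg unfolding kalgebra_def by blast
lemma sm_l: "mul (smul c x) y = smul c (mul x y)" using kalg unfolding kalgebra_def by blast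
lemma sm_r: "mul x (smul c y) = smul c (mul x y)" using kalg unfolding kalgebra_def by blast
lemma unit_l[simp]: "mul e x = x" using kalg unfolding kalgebra_def by blast
lemma unit_r[simp]: "mul x e = x" using kalg unfolding kalgebra_def by blast

lemma mul0l[simp]: "mul 0 x = 0"
proof -
  have "mul (0 + 0) x = mul 0 x + mul 0 x" by (rule add_l)
  then show ?thesis by simp
qed
lemma mul0r[simp]: "mul x 0 = 0"
proof -
  have "mul x (0 + 0) = mul x 0 + mul x 0" by (rule add_r)
  then show ?thesis by simp
qed
lemma mul_minus_l: "mul (- x) y = - mul x y"
proof -
  have "mul (x + - x) y = mul x y + mul (-x) y" by (rule add_l)
  then show ?thesis by (simp add: eq_neg_iff_add_eq_0 add.commute)
qed
lemma mul_minus_r: "mul y (- x) = - mul y x"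
proof -
  have "mul y (x + - x) = mul y x + mul y (-x)" by (rule add_r)
  then show ?thesis by (simp add: eq_neg_iff_add_eq_0 add.commute)
qed

lemma mul_sum_l: "mul (sum f S) y = (\<Sum>s\<in>S. mul (f s) y)"
  by (induction S rule: infinite_finite_induct) (auto simp: add_l)
lemma mul_sum_r: "mul y (sum f S) = (\<Sum>s\<in>S. mul y (f s))"
  by (induction S rule: infinite_finite_induct) (auto simp: add_r)

lemma nuc1: "mul a (mul y z) = mul (mul a y) z" using nuc unfolding nucleus_def by blast
lemma nuc2: "mul (mul y a) z = mul y (mul a z)" using nuc unfolding nucleus_def by blast
lemma nuc3: "mul (mul y z) a = mul y (mul z a)" using nuc unfolding nucleus_def by blast

lemma chi0: "chi x = -\<infinity> \<longleftrightarrow> x = 0" using pd unfolding pseudo_degree_def by blast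
lemma chi_fin: "x \<noteq> 0 \<Longrightarrow> \<exists>k::int. chi x = ereal (of_int k)" using pd unfolding pseudo_degree_def by blast
lemma chi_mul: "chi (mul x y) = chi x + chi y" using pd unfolding pseudo_degree_def by blast
lemma chi_add: "chi (x + y) \<le> max (chi x) (chi y)" using pd unfolding pseudo_degree_def by blast

lemma chi_00[simp]: "chi 0 = -\<infinity>" using chi0 by simp

lemma a_ne0: "a \<noteq> 0" using chia chi0 by auto

lemma e_ne0: "e \<noteq> 0"
proof
  assume "e = 0"
  then have "a = 0" using unit_r[of a] by simp
  then show False using a_ne0 by simp
qed

lemma mul_ne0: "x \<noteq> 0 \<Longrightarrow> y \<noteq> 0 \<Longrightarrow> mul x y \<noteq> 0"
proof -
  assume "x \<noteq> 0" "y \<noteq> 0"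
  then obtain k l where "chi x = ereal (of_int k)" "chi y = ereal (of_int l)" using chi_fin by blast
  then have "chi (mul x y) \<noteq> -\<infinity>" using chi_mul by simp
  then show ?thesis using chi0 by blast
qed

lemma chi_e: "chi e = 0"
proof -
  obtain k where k: "chi e = ereal (of_int k)" using chi_fin e_ne0 by blast
  have "chi e = chi e + chi e" using chi_mul[of e e] by simp
  then show ?thesis using k by simp
qed

lemma chi_neg: "chi (- x) = chi x"
proof -
  have ee: "mul (-e) (-e) = e" by (simp add: mul_minus_l mul_minus_r)
  have "-e \<noteq> 0" using e_ne0 by simp
  then obtain k where k: "chi (-e) = ereal (of_int k)" using chi_fin by blast
  have "chi e = chi (-e) + chi (-e)" using chi_mul[of "-e" "-e"] ee by simp
  then have "chi (-e) = 0" using k chi_e by simp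
  moreover have "- x = mul (-e) x" by (simp add: mul_minus_l)
  ultimately show ?thesis using chi_mul by simp
qed

lemma chi_add_gt: "chi y < chi x \<Longrightarrow> chi (x + y) = chi x"
proof -
  assume lt: "chi y < chi x"
  have "chi (x + y) \<le> chi x" using chi_add[of x y] lt by simp
  moreover have "chi x \<le> max (chi (x + y)) (chi y)"
    using chi_add[of "x + y" "- y"] chi_neg[of y] by simp
  ultimately show ?thesis using lt by (auto simp: max_def split: if_splits)
qed

lemma chi_add_neq: "chi x \<noteq> chi y \<Longrightarrow> chi (x + y) = max (chi x) (chi y)"
proof -
  assume "chi x \<noteq> chi y"
  then consider "chi y < chi x" | "chi x < chi y" by fastforce
  then show ?thesis
  proof cases
    case 1 then show ?thesis using chi_add_gt by simp
  next
    case 2 then show ?thesis using chi_add_gt[of x y] by (simp add: add.commute)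
  qed
qed

abbreviation "C \<equiv> centralizer mul a"

lemma C_add: "x \<in> C \<Longrightarrow> y \<in> C \<Longrightarrow> x + y \<in> C"
  unfolding centralizer_def by (simp add: add_l add_r)
lemma C_smul: "x \<in> C \<Longrightarrow> smul c x \<in> C"
  unfolding centralizer_def by (simp add: sm_l sm_r)
lemma C_e: "e \<in> C" unfolding centralizer_def by simp
lemma C_a: "a \<in> C" unfolding centralizer_def by simp
lemma C_mul: "x \<in> C \<Longrightarrow> y \<in> C \<Longrightarrow> mul x y \<in> C"
proof -
  assume x: "x \<in> C" and y: "y \<in> C"
  have "mul (mul x y) a = mul x (mul y a)" by (rule nuc3)
  also have "\<dots> = mul x (mul a y)" using y unfolding centralizer_def by simp
  also have "\<dots> = mul (mul x a) y" by (rule nuc2[symmetric])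
  also have "\<dots> = mul (mul a x) y" using x unfolding centralizer_def by simp
  also have "\<dots> = mul a (mul x y)" by (rule nuc1[symmetric])
  finally show ?thesis unfolding centralizer_def by simp
qed

lemma D1_pos: "x \<in> C \<Longrightarrow> x \<noteq> 0 \<Longrightarrow> chi x \<ge> 0" using D1 unfolding condD1_def by blast
lemma D1_red: "b1 \<in> C \<Longrightarrow> b2 \<in> C \<Longrightarrow> b1 \<noteq> 0 \<Longrightarrow> b2 \<noteq> 0 \<Longrightarrow> chi b1 = chi b2 \<Longrightarrow>
   \<exists>\<alpha>1 \<alpha>2. (\<alpha>1 \<noteq> 0 \<or> \<alpha>2 \<noteq> 0) \<and> chi (smul \<alpha>1 b1 + smul \<alpha>2 b2) < chi b1"
  using D1 unfolding condD1_def by blast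

lemma chi_se: "c \<noteq> 0 \<Longrightarrow> chi (smul c e) = 0"
proof -
  assume c: "c \<noteq> 0"
  have in1: "smul c e \<in> C" "smul (inverse c) e \<in> C" using C_smul C_e by auto
  have n1: "smul c e \<noteq> 0" "smul (inverse c) e \<noteq> 0" using c e_ne0 by auto
  have "mul (smul c e) (smul (inverse c) e) = e" using c by (simp add: sm_l sm_r)
  then have "chi (smul c e) + chi (smul (inverse c) e) = 0" using chi_mul chi_e by metis
  moreover have "chi (smul c e) \<ge> 0" "chi (smul (inverse c) e) \<ge> 0" using D1_pos in1 n1 by auto
  moreover obtain k l where "chi (smul c e) = ereal (of_int k)" "chi (smul (inverse c) e) = ereal (of_int l)"
    using chi_fin n1 by blast
  ultimately show ?thesis by simp
qed

lemma chi_smul: "c \<noteq> 0 \<Longrightarrow> chi (smul c x) = chi x"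
proof -
  assume c: "c \<noteq> 0"
  have "smul c x = mul (smul c e) x" by (simp add: sm_l)
  then show ?thesis using chi_mul chi_se[OF c] by simp
qed

lemma C_deg: "x \<in> C \<Longrightarrow> x \<noteq> 0 \<Longrightarrow> \<exists>n::nat. chi x = ereal (of_nat n)"
proof -
  assume "x \<in> C" "x \<noteq> 0"
  then obtain k where k: "chi x = ereal (of_int k)" and "chi x \<ge> 0" using chi_fin D1_pos by blast
  then have "k \<ge> 0" by simp
  then have "chi x = ereal (of_nat (nat k))" using k by simp
  then show ?thesis by blast
qed


primrec pw :: "nat \<Rightarrow> 'b" where
  "pw 0 = e" | "pw (Suc n) = mul a (pw n)"

lemma pw_C: "pw n \<in> C" by (induction n) (auto intro: C_mul C_a C_e)
lemma pw_chi: "chi (pw n) = ereal (of_nat n * m)"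
  by (induction n) (auto simp: chi_e chi_mul chia algebra_simps)
lemma pw_ne0: "pw n \<noteq> 0" using pw_chi[of n] chi0 by auto
lemma pw_add: "mul (pw i) (pw j) = pw (i + j)"
  by (induction i) (auto simp: nuc1[symmetric])
lemma pw_1: "pw 1 = a" by simp

abbreviation "G \<equiv> gen_subalgebra smul mul e a"

lemma G_sub: "subalgebra smul mul e G"
  unfolding gen_subalgebra_def subalgebra_def by blast
lemma G_add: "x \<in> G \<Longrightarrow> y \<in> G \<Longrightarrow> x + y \<in> G" using G_sub unfolding subalgebra_def by blast
lemma G_smul: "x \<in> G \<Longrightarrow> smul c x \<in> G" using G_sub unfolding subalgebra_def by blast
lemma G_0: "0 \<in> G" using G_sub unfolding subalgebra_def by (metis vs.scale_zero_left)
lemma pw_G: "pw n \<in> G"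
proof -
  have "pw n \<in> B" if "subalgebra smul mul e B" "a \<in> B" for B
    using that unfolding subalgebra_def by (induction n) auto
  then show ?thesis unfolding gen_subalgebra_def by blast
qed

definition P :: "'b set" where
  "P = {p. \<exists>c n. p = (\<Sum>i<n. smul (c i) (pw i))}"

lemma P_intro: "x = (\<Sum>i<n. smul (c i) (pw i)) \<Longrightarrow> x \<in> P"
  unfolding P_def by blast

lemma P_chi: "(\<Sum>i<n. smul (c i) (pw i)) = 0 \<or>
   (\<exists>k<n. chi (\<Sum>i<n. smul (c i) (pw i)) = ereal (of_nat k * m))"
proof (induction n)
  case 0 then show ?case by simp
next
  case (Suc n)
  let ?S = "\<Sum>i<n. smul (c i) (pw i)"
  have eq: "(\<Sum>i<Suc n. smul (c i) (pw i)) = ?S + smul (c n) (pw n)" by simp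
  show ?case
  proof (cases "c n = 0")
    case True
    then have "(\<Sum>i<Suc n. smul (c i) (pw i)) = ?S" using eq by simp
    then show ?thesis using Suc less_SucI by metis
  next
    case False
    have t: "chi (smul (c n) (pw n)) = ereal (of_nat n * m)" using chi_smul[OF False] pw_chi by simp
    have "chi ?S < ereal (of_nat n * m)"
    proof (cases "?S = 0")
      case True then show ?thesis by simp
    next
      case F: False
      then obtain k where "k < n" "chi ?S = ereal (of_nat k * m)" using Suc by blast
      then show ?thesis using mpos by simp
    qed
    then have "chi (?S + smul (c n) (pw n)) = ereal (of_nat n * m)"
      using chi_add_gt[of ?S "smul (c n) (pw n)"] t by (simp add: add.commute)
    then show ?thesis using eq by auto
  qed
qed

lemma P_pad: "n \<le> N \<Longrightarrow> (\<Sum>i<n. smul (c i) (pw i)) = (\<Sum>i<N. smul (if i < n then c i else 0) (pw i))"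
  by (rule sum.mono_neutral_cong_left) auto

lemma P_0: "0 \<in> P" unfolding P_def by (rule CollectI, rule exI[of _ "\<lambda>_. 0"], rule exI[of _ 0]) simp

lemma P_add: "x \<in> P \<Longrightarrow> y \<in> P \<Longrightarrow> x + y \<in> P"
proof -
  assume "x \<in> P" "y \<in> P"
  then obtain c n d k where x: "x = (\<Sum>i<n. smul (c i) (pw i))" and y: "y = (\<Sum>i<k. smul (d i) (pw i))"
    unfolding P_def by blast
  let ?N = "max n k"
  have "x + y = (\<Sum>i<?N. smul (if i < n then c i else 0) (pw i)) + (\<Sum>i<?N. smul (if i < k then d i else 0) (pw i))"
    unfolding x y by (simp add: P_pad[of n ?N] P_pad[of k ?N])
  also have "\<dots> = (\<Sum>i<?N. smul ((if i < n then c i else 0) + (if i < k then d i else 0)) (pw i))"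
    by (simp add: sum.distrib[symmetric] vs.scale_left_distrib)
  finally show ?thesis by (rule P_intro)
qed

lemma P_smul: "x \<in> P \<Longrightarrow> smul d x \<in> P"
proof -
  assume "x \<in> P"
  then obtain c n where x: "x = (\<Sum>i<n. smul (c i) (pw i))" unfolding P_def by blast
  have "smul d x = (\<Sum>i<n. smul (d * c i) (pw i))" unfolding x by (simp add: vs.scale_sum_right)
  then show ?thesis by (rule P_intro)
qed

lemma P_sum: "(\<And>s. s \<in> S \<Longrightarrow> f s \<in> P) \<Longrightarrow> sum f S \<in> P"
  by (induction S rule: infinite_finite_induct) (auto intro: P_0 P_add)

lemma pw_P: "pw k \<in> P"
proof -
  have "(\<Sum>i<Suc k. smul (if i = k then 1 else 0) (pw i)) = pw k"
    by (simp add: sum.delta)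
  then show ?thesis by (rule P_intro[OF sym])
qed

lemma P_mul: "x \<in> P \<Longrightarrow> y \<in> P \<Longrightarrow> mul x y \<in> P"
proof -
  assume "x \<in> P" "y \<in> P"
  then obtain c n d k where x: "x = (\<Sum>i<n. smul (c i) (pw i))" and y: "y = (\<Sum>i<k. smul (d i) (pw i))"
    unfolding P_def by blast
  have "mul x y = (\<Sum>j<k. smul (d j) (\<Sum>i<n. smul (c i) (pw (i + j))))"
    unfolding x y by (simp add: mul_sum_l mul_sum_r sm_l sm_r pw_add)
  also have "\<dots> \<in> P" by (intro P_sum P_smul pw_P)
  finally show ?thesis .
qed

lemma P_sub: "subalgebra smul mul e P"
  unfolding subalgebra_def using pw_P[of 0] P_add P_mul P_smul by auto

lemma G_P: "G \<subseteq> P"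
  unfolding gen_subalgebra_def using P_sub pw_P[of 1] by auto

lemma G_chi: "p \<in> G \<Longrightarrow> p \<noteq> 0 \<Longrightarrow> \<exists>k::nat. chi p = ereal (of_nat k * m)"
  using G_P P_chi unfolding P_def by blast


definition MM :: nat where "MM = nat m"
lemma MM_m: "int MM = m" unfolding MM_def using mpos by simp
lemma MM_pos: "MM > 0" unfolding MM_def using mpos by simp

definition Dset :: "nat set" where
  "Dset = {n. \<exists>x\<in>C. x \<noteq> 0 \<and> chi x = ereal (of_nat n)}"
definition RR :: "nat set" where "RR = (\<lambda>n. n mod MM) ` Dset"

lemma Dset_0: "0 \<in> Dset" unfolding Dset_def using C_e e_ne0 chi_e by auto
lemma Dset_add: "n1 \<in> Dset \<Longrightarrow> n2 \<in> Dset \<Longrightarrow> n1 + n2 \<in> Dset"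
proof -
  assume "n1 \<in> Dset" "n2 \<in> Dset"
  then obtain x y where "x \<in> C" "x \<noteq> 0" "chi x = ereal (of_nat n1)" "y \<in> C" "y \<noteq> 0" "chi y = ereal (of_nat n2)"
    unfolding Dset_def by blast
  then have "mul x y \<in> C" "mul x y \<noteq> 0" "chi (mul x y) = ereal (of_nat (n1 + n2))"
    using C_mul mul_ne0 chi_mul by auto
  then show ?thesis unfolding Dset_def by blast
qed

lemma card_RR: "card RR dvd MM"
proof (rule submonoid_card_dvd[OF MM_pos])
  show "RR \<subseteq> {..<MM}" unfolding RR_def using MM_pos by auto
  show "0 \<in> RR" unfolding RR_def using Dset_0 by force
  show "\<forall>r\<in>RR. \<forall>s\<in>RR. (r + s) mod MM \<in> RR"
  proof (intro ballI)
    fix r s assume "r \<in> RR" "s \<in> RR"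
    then obtain n1 n2 where "n1 \<in> Dset" "n2 \<in> Dset" "r = n1 mod MM" "s = n2 mod MM" unfolding RR_def by blast
    then show "(r + s) mod MM \<in> RR" unfolding RR_def using Dset_add by (auto simp: mod_add_eq)
  qed
qed

lemma finite_RR: "finite RR"
proof -
  have "RR \<subseteq> {..<MM}" unfolding RR_def using MM_pos by auto
  then show ?thesis using finite_subset by blast
qed

definition dmin :: "nat \<Rightarrow> nat" where "dmin r = (LEAST n. n \<in> Dset \<and> n mod MM = r)"
definition bsel :: "nat \<Rightarrow> 'b" where
  "bsel r = (SOME x. x \<in> C \<and> x \<noteq> 0 \<and> chi x = ereal (of_nat (dmin r)))"

lemma dmin: "r \<in> RR \<Longrightarrow> dmin r \<in> Dset \<and> dmin r mod MM = r"
  unfolding dmin_def RR_def by (rule LeastI_ex) blast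
lemma dmin_le: "n \<in> Dset \<Longrightarrow> n mod MM = r \<Longrightarrow> dmin r \<le> n"
  unfolding dmin_def by (rule Least_le) simp
lemma bsel: "r \<in> RR \<Longrightarrow> bsel r \<in> C \<and> bsel r \<noteq> 0 \<and> chi (bsel r) = ereal (of_nat (dmin r))"
proof -
  assume "r \<in> RR"
  then have "dmin r \<in> Dset" using dmin by blast
  then have "\<exists>x. x \<in> C \<and> x \<noteq> 0 \<and> chi x = ereal (of_nat (dmin r))" unfolding Dset_def by blast
  then show ?thesis unfolding bsel_def by (rule someI_ex)
qed

lemma bsel_inj: "inj_on bsel RR"
proof (rule inj_onI)
  fix r s assume r: "r \<in> RR" and s: "s \<in> RR" and eq: "bsel r = bsel s"
  then have "ereal (of_nat (dmin r)) = ereal (of_nat (dmin s))" using bsel by metis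
  then have "dmin r = dmin s" by simp
  then show "r = s" using dmin r s by metis
qed

definition BB :: "'b set" where "BB = bsel ` RR"

lemma card_BB: "card BB = card RR" unfolding BB_def using bsel_inj by (simp add: card_image)
lemma finite_BB: "finite BB" unfolding BB_def using finite_RR by simp
lemma BB_C: "BB \<subseteq> C" unfolding BB_def using bsel by auto

definition Sp :: "'b set" where
  "Sp = {x. \<exists>p. (\<forall>b\<in>BB. p b \<in> G) \<and> x = (\<Sum>b\<in>BB. mul (p b) b)}"

lemma Sp_intro: "(\<And>b. b \<in> BB \<Longrightarrow> p b \<in> G) \<Longrightarrow> x = (\<Sum>b\<in>BB. mul (p b) b) \<Longrightarrow> x \<in> Sp"
  unfolding Sp_def by blast

lemma Sp_0: "0 \<in> Sp"
proof -
  show ?thesis by (rule Sp_intro[of "\<lambda>_. 0"]) (simp_all add: G_0)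
qed

lemma Sp_add: "x \<in> Sp \<Longrightarrow> y \<in> Sp \<Longrightarrow> x + y \<in> Sp"
proof -
  assume "x \<in> Sp" "y \<in> Sp"
  then obtain p q where p: "\<forall>b\<in>BB. p b \<in> G" "x = (\<Sum>b\<in>BB. mul (p b) b)"
    and q: "\<forall>b\<in>BB. q b \<in> G" "y = (\<Sum>b\<in>BB. mul (q b) b)" unfolding Sp_def by blast
  show ?thesis
    by (rule Sp_intro[of "\<lambda>b. p b + q b"]) (use p q G_add in \<open>simp_all add: add_l sum.distrib\<close>)
qed

lemma Sp_smul: "x \<in> Sp \<Longrightarrow> smul c x \<in> Sp"
proof -
  assume "x \<in> Sp"
  then obtain p where p: "\<forall>b\<in>BB. p b \<in> G" "x = (\<Sum>b\<in>BB. mul (p b) b)" unfolding Sp_def by blast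
  show ?thesis
    by (rule Sp_intro[of "\<lambda>b. smul c (p b)"]) (use p G_smul in \<open>simp_all add: sm_l vs.scale_sum_right\<close>)
qed

lemma Sp_gen: "r \<in> RR \<Longrightarrow> mul (pw k) (bsel r) \<in> Sp"
proof -
  assume r: "r \<in> RR"
  then have br: "bsel r \<in> BB" unfolding BB_def by blast
  define p where "p = (\<lambda>b. if b = bsel r then pw k else 0)"
  have "\<forall>b\<in>BB. p b \<in> G" unfolding p_def using pw_G G_0 by simp
  moreover have "(\<Sum>b\<in>BB. mul (p b) b) = (\<Sum>b\<in>BB. if b = bsel r then mul (pw k) b else 0)"
    unfolding p_def by (intro sum.cong) auto
  moreover have "\<dots> = mul (pw k) (bsel r)" using finite_BB br by (simp add: sum.delta')
  ultimately show ?thesis unfolding Sp_def by auto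
qed

lemma span_all: "x \<in> C \<Longrightarrow> (x = 0 \<or> chi x = ereal (of_nat n)) \<Longrightarrow> x \<in> Sp"
proof (induction n arbitrary: x rule: less_induct)
  case (less n x)
  show ?case
  proof (cases "x = 0")
    case True then show ?thesis using Sp_0 by simp
  next
    case False
    then have chin: "chi x = ereal (of_nat n)" using less.prems by simp
    have xC: "x \<in> C" using less.prems by simp
    have nD: "n \<in> Dset" unfolding Dset_def using xC False chin by blast
    define r where "r = n mod MM"
    have rR: "r \<in> RR" unfolding RR_def r_def using nD by blast
    define dn where "dn = dmin r"
    have dn: "dn \<le> n" "dn mod MM = n mod MM" using dmin_le[OF nD] dmin[OF rR] unfolding dn_def r_def by auto
    obtain k where nk: "n = dn + MM * k" using dn mod_eq_nat2E by metis
    define b where "b = bsel r"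
    have b: "b \<in> C" "b \<noteq> 0" "chi b = ereal (of_nat dn)" using bsel[OF rR] unfolding b_def dn_def by auto
    define z where "z = mul (pw k) b"
    have zC: "z \<in> C" unfolding z_def using pw_C b C_mul by blast
    have zne: "z \<noteq> 0" unfolding z_def using pw_ne0 b mul_ne0 by blast
    have chiz: "chi z = chi x"
    proof -
      have "chi z = ereal (of_int (int k * m)) + ereal (of_nat dn)" unfolding z_def using chi_mul pw_chi b by simp
      also have "\<dots> = ereal (of_nat n)" unfolding nk using MM_m[symmetric] by simp
      finally show ?thesis using chin by simp
    qed
    obtain \<alpha>1 \<alpha>2 where al: "\<alpha>1 \<noteq> 0 \<or> \<alpha>2 \<noteq> 0" and lt: "chi (smul \<alpha>1 x + smul \<alpha>2 z) < chi x"
      using D1_red[OF xC zC False zne chiz[symmetric]] by blast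
    have a1: "\<alpha>1 \<noteq> 0"
    proof
      assume "\<alpha>1 = 0"
      then have "\<alpha>2 \<noteq> 0" using al by simp
      then have "chi (smul \<alpha>1 x + smul \<alpha>2 z) = chi x" using \<open>\<alpha>1 = 0\<close> chi_smul chiz by simp
      then show False using lt by simp
    qed
    define y where "y = smul \<alpha>1 x + smul \<alpha>2 z"
    have yC: "y \<in> C" unfolding y_def using xC zC C_add C_smul by blast
    have ySp: "y \<in> Sp"
    proof (cases "y = 0")
      case True then show ?thesis using Sp_0 by simp
    next
      case F: False
      then obtain n' where n': "chi y = ereal (of_nat n')" using C_deg yC by blast
      then have "n' < n" using lt chin unfolding y_def by simp
      then show ?thesis using less.IH yC n' by blast
    qed
    have zSp: "z \<in> Sp" unfolding z_def b_def using Sp_gen[OF rR] .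
    have "x = smul (inverse \<alpha>1) y + smul (- (inverse \<alpha>1 * \<alpha>2)) z"
      unfolding y_def using a1 by (simp add: vs.scale_right_distrib vs.scale_minus_left)
    then show ?thesis using Sp_add Sp_smul ySp zSp by metis
  qed
qed


lemma chi_sum_distinct:
  "finite S \<Longrightarrow> (\<forall>x\<in>S. \<forall>y\<in>S. x \<noteq> y \<longrightarrow> f x \<noteq> 0 \<longrightarrow> f y \<noteq> 0 \<longrightarrow> chi (f x) \<noteq> chi (f y))
   \<Longrightarrow> chi (sum f S) = (SUP x\<in>S. chi (f x))"
proof (induction S rule: finite_induct)
  case empty then show ?case by (simp add: bot_ereal_def)
next
  case (insert x S)
  have IH: "chi (sum f S) = (SUP y\<in>S. chi (f y))" using insert by blast
  have eq: "sum f (insert x S) = f x + sum f S" using insert by simp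
  have sup: "(SUP y\<in>insert x S. chi (f y)) = max (chi (f x)) (SUP y\<in>S. chi (f y))"
    by (simp add: sup_max)
  show ?case
  proof (cases "f x = 0")
    case True then show ?thesis using eq sup IH by simp
  next
    case False
    have ne: "chi (f x) \<noteq> (SUP y\<in>S. chi (f y))"
    proof (cases "S = {}")
      case True then show ?thesis using False chi0 by (simp add: bot_ereal_def)
    next
      case SN: False
      have "(SUP y\<in>S. chi (f y)) = Max ((\<lambda>y. chi (f y)) ` S)"
        using insert SN by (simp add: cSup_eq_Max)
      also have "\<dots> \<in> (\<lambda>y. chi (f y)) ` S" using insert SN by (intro Max_in) auto
      finally obtain y where y: "y \<in> S" "(SUP y\<in>S. chi (f y)) = chi (f y)" by blast
      show ?thesis
      proof (cases "f y = 0")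
        case True then show ?thesis using y False chi0 by simp
      next
        case F2: False
        have "x \<noteq> y" using y insert by blast
        then show ?thesis using insert.prems y F2 False by auto
      qed
    qed
    show ?thesis using eq sup IH chi_add_neq[OF ne[folded IH]] by simp
  qed
qed

lemma indep: "(\<forall>b\<in>BB. p b \<in> G) \<Longrightarrow> (\<Sum>b\<in>BB. mul (p b) b) = 0 \<Longrightarrow> \<forall>b\<in>BB. p b = 0"
proof (rule ccontr)
  assume pG: "\<forall>b\<in>BB. p b \<in> G" and s0: "(\<Sum>b\<in>BB. mul (p b) b) = 0" and "\<not> (\<forall>b\<in>BB. p b = 0)"
  then obtain b0 where b0: "b0 \<in> BB" "p b0 \<noteq> 0" by blast
  define f where "f = (\<lambda>b. mul (p b) b)"
  have deg: "\<exists>r\<in>RR. b = bsel r \<and> (\<exists>k::nat. chi (f b) = ereal (of_nat (k * MM + dmin r)))"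
    if bB: "b \<in> BB" "p b \<noteq> 0" for b
  proof -
    obtain r where r: "r \<in> RR" "b = bsel r" using bB unfolding BB_def by blast
    obtain k where k: "chi (p b) = ereal (of_int (int k * m))" using G_chi pG bB by blast
    have "chi (f b) = ereal (of_int (int k * m)) + ereal (of_nat (dmin r))"
      unfolding f_def using chi_mul k bsel r by simp
    also have "\<dots> = ereal (of_nat (k * MM + dmin r))" using MM_m[symmetric] by simp
    finally show ?thesis using r by blast
  qed
  have dist: "\<forall>x\<in>BB. \<forall>y\<in>BB. x \<noteq> y \<longrightarrow> f x \<noteq> 0 \<longrightarrow> f y \<noteq> 0 \<longrightarrow> chi (f x) \<noteq> chi (f y)"
  proof (intro ballI impI)
    fix x y assume xy: "x \<in> BB" "y \<in> BB" "x \<noteq> y" "f x \<noteq> 0" "f y \<noteq> 0"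
    then have px: "p x \<noteq> 0" "p y \<noteq> 0" unfolding f_def by auto
    obtain r1 k1 where r1: "r1 \<in> RR" "x = bsel r1" "chi (f x) = ereal (of_nat (k1 * MM + dmin r1))"
      using deg[OF xy(1) px(1)] by blast
    obtain r2 k2 where r2: "r2 \<in> RR" "y = bsel r2" "chi (f y) = ereal (of_nat (k2 * MM + dmin r2))"
      using deg[OF xy(2) px(2)] by blast
    show "chi (f x) \<noteq> chi (f y)"
    proof
      assume "chi (f x) = chi (f y)"
      then have "ereal (of_nat (k1 * MM + dmin r1)) = ereal (of_nat (k2 * MM + dmin r2))"
        using r1(3) r2(3) by (simp only:)
      then have "k1 * MM + dmin r1 = k2 * MM + dmin r2" by (simp only: ereal.inject of_nat_eq_iff)
      then have "(k1 * MM + dmin r1) mod MM = (k2 * MM + dmin r2) mod MM" by simp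
      then have "dmin r1 mod MM = dmin r2 mod MM" by simp
      moreover have "dmin r1 mod MM = r1" using dmin[OF r1(1)] by blast
      moreover have "dmin r2 mod MM = r2" using dmin[OF r2(1)] by blast
      ultimately have "r1 = r2" by simp
      then show False using xy r1 r2 by simp
    qed
  qed
  have "chi (sum f BB) = (SUP x\<in>BB. chi (f x))" using chi_sum_distinct[OF finite_BB dist] .
  moreover have "chi (f b0) \<le> (SUP x\<in>BB. chi (f x))" using b0 by (intro SUP_upper) auto
  moreover have "f b0 \<noteq> 0"
  proof -
    obtain r where rr: "r \<in> RR" "b0 = bsel r" using b0(1) unfolding BB_def by blast
    have "b0 \<noteq> 0" using bsel[OF rr(1)] rr(2) by simp
    then show ?thesis unfolding f_def using b0(2) by (intro mul_ne0)
  qed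
  then have "chi (f b0) \<noteq> -\<infinity>" by (simp add: chi0)
  ultimately have "chi (sum f BB) \<noteq> -\<infinity>"
    by (metis ereal_infty_less_eq(2))
  then show False using s0 unfolding f_def by simp
qed

lemma main: "\<exists>B. left_module_basis mul G C B \<and> int (card B) dvd m"
proof (intro exI conjI)
  show "left_module_basis mul G C BB"
    unfolding left_module_basis_def
  proof (intro conjI finite_BB BB_C ballI allI impI)
    fix x assume x: "x \<in> C"
    have "x \<in> Sp"
    proof (cases "x = 0")
      case True then show ?thesis using Sp_0 by simp
    next
      case False
      then obtain n where "chi x = ereal (of_nat n)" using C_deg x by blast
      then show ?thesis using span_all x by blast
    qed
    then show "\<exists>p. (\<forall>b\<in>BB. p b \<in> G) \<and> x = (\<Sum>b\<in>BB. mul (p b) b)" unfolding Sp_def by blast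
  next
    fix p b assume "(\<forall>b\<in>BB. p b \<in> G) \<and> (\<Sum>b\<in>BB. mul (p b) b) = 0" "b \<in> BB"
    then show "p b = 0" using indep by blast
  qed
  have "card BB dvd MM" using card_BB card_RR by simp
  then have "int (card BB) dvd int MM" by (simp only: of_nat_dvd_iff)
  then show "int (card BB) dvd m" using MM_m by simp
qed

end


theorem theorem2p10:
  fixes smul :: "'k::field \<Rightarrow> 'b::ab_group_add \<Rightarrow> 'b"
    and mul :: "'b \<Rightarrow> 'b \<Rightarrow> 'b" and e :: 'b
    and chi :: "'b \<Rightarrow> ereal" and a :: 'b and m :: int
  assumes "CHAR('k) \<noteq> 2"
    and "kalgebra smul mul e"
    and "pseudo_degree mul chi"
    and "a \<in> nucleus mul"
    and "chi a = ereal (of_int m)" and "m > 0"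
    and "condD1 smul chi (centralizer mul a)"
  shows "\<exists>B. left_module_basis mul (gen_subalgebra smul mul e a) (centralizer mul a) B
             \<and> int (card B) dvd m"
proof -
  interpret T: thm_setting smul mul e chi a m
    by (rule thm_setting.intro) (fact assms)+
  show ?thesis by (rule T.main)
qed

end
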